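(* In the IM-OCP setting described in the context, assume $p_t\ge p_{\min}>0$ for all $t$, with $p_{\min}$ independent of $T$, and let $c>0$ and $\beta\in(0,1)$ be constants independent of $T$. Use either the fixed step size $\eta_t=cT^{-\beta}$ for $t=1,\dots,T$ (horizon $T$), or the decaying step size $\eta_t=ct^{-\beta}$. Then there is a constant $A$ independent of $T$ such that $$\left|\mathbb{E}\left[\frac{1}{T}\sum_{t=1}^TE_t\right]-\alpha\right|\le A\,T^{-(1-\beta)},$$ and the expected regret satisfies $\overline{\mathrm{Reg}}(T)=\mathcal{O}\big(T^{\max\{\beta,1-\beta\}}\big)$. In particular $\beta=1/2$ gives miscoverage $\mathcal{O}(T^{-1/2})$ and regret $\mathcal{O}(\sqrt{T})$.
   Context: Fix $\alpha\in(0,1)$ and $B>0$. Let $(r_t^* )_{t\ge1}$ be an arbitrary deterministic sequence of scores with $r_t^*\in[0,B]$. Given thresholds $r_t$, the miscoverage indicator is $E_t=\mathbb{1}\{r_t^*>r_t\}$. The quantile loss is $\ell_{1-\alpha}(r,r^* )=(\alpha-\mathbb{1}\{r<r^*\})(r-r^* )$. Let $P$ be a probability distribution on $[0,B]$ with bounded density, $\sigma>0$, and $R(r)=\mathbb{E}_{r^*\sim P}[\ell_{1-\alpha}(r,r^* )]+\frac{\sigma}{2}r^2$; $R$ is differentiable and $\nabla R$ is a continuous strictly increasing bijection of $\mathbb{R}$. Feedback: $p_t\in(0,1]$ and $(\mathrm{obs}_t)_{t\ge1}$ are independent Bernoulli random variables with $\Pr(\mathrm{obs}_t=1)=p_t$;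 expectations are over these. IM-OCP: given $r_1\in[0,B]$ and step sizes $\eta_t>0$, for $t\ge2$ the threshold $r_t$ is defined by $$\nabla R(r_t)=\nabla R(r_{t-1})-\eta_{t-1}(\alpha-E_{t-1})\frac{\mathrm{obs}_{t-1}}{p_{t-1}}.$$ The expected regret is $\overline{\mathrm{Reg}}(T)=\mathbb{E}\big[\sum_{i=1}^T\ell_{1-\alpha}(r_i,r_i^* )\mathrm{obs}_i/p_i\big]-\min_{u\in\mathbb{R}}\sum_{i=1}^T\ell_{1-\alpha}(u,r_i^* )$. *)

theory Defs
  imports "HOL-Probability.Probability"
begin

definition qloss :: "real \<Rightarrow> real \<Rightarrow> real \<Rightarrow> real" where
  "qloss \<alpha> r rs = (\<alpha> - (if r < rs then 1 else 0)) * (r - rs)"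

definition miscov :: "real \<Rightarrow> real \<Rightarrow> real" where
  "miscov r rs = (if rs > r then 1 else 0)"

definition Rfun :: "real measure \<Rightarrow> real \<Rightarrow> real \<Rightarrow> real \<Rightarrow> real" where
  "Rfun P \<alpha> \<sigma> r = (\<integral>x. qloss \<alpha> r x \<partial>P) + \<sigma> / 2 * r\<^sup>2"

text \<open>IM-OCP thresholds r_t (t \<ge> 1), with gradient map G = nabla R:
  G(r_{t+1}) = G(r_t) - eta_t (alpha - E_t) obs_t / p_t, i.e. r_{t+1} = G^{-1}(...).
  Index 0 is unused (set to r_1).\<close>
fun imocp :: "(real \<Rightarrow> real) \<Rightarrow> real \<Rightarrow> real \<Rightarrow> (nat \<Rightarrow> real) \<Rightarrow> (nat \<Rightarrow> real)
    \<Rightarrow> (nat \<Rightarrow> real) \<Rightarrow> (nat \<Rightarrow> bool) \<Rightarrow> nat \<Rightarrow> real" where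
  "imocp G \<alpha> r1 \<eta> p rs obs 0 = r1"
| "imocp G \<alpha> r1 \<eta> p rs obs (Suc 0) = r1"
| "imocp G \<alpha> r1 \<eta> p rs obs (Suc (Suc t)) =
     (let r = imocp G \<alpha> r1 \<eta> p rs obs (Suc t)
      in inv G (G r - \<eta> (Suc t) * (\<alpha> - miscov r (rs (Suc t)))
                   * (if obs (Suc t) then 1 else 0) / p (Suc t)))"

definition obs_pmf :: "(nat \<Rightarrow> real) \<Rightarrow> nat \<Rightarrow> (nat \<Rightarrow> bool) pmf" where
  "obs_pmf p T = Pi_pmf {1..T} False (\<lambda>t. bernoulli_pmf (p t))"

definition exp_miscov :: "(real \<Rightarrow> real) \<Rightarrow> real \<Rightarrow> real \<Rightarrow> (nat \<Rightarrow> real) \<Rightarrow> (nat \<Rightarrow> real)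
    \<Rightarrow> (nat \<Rightarrow> real) \<Rightarrow> nat \<Rightarrow> real" where
  "exp_miscov G \<alpha> r1 \<eta> p rs T =
     measure_pmf.expectation (obs_pmf p T)
       (\<lambda>obs. (1 / real T) * (\<Sum>t\<in>{1..T}. miscov (imocp G \<alpha> r1 \<eta> p rs obs t) (rs t)))"

definition exp_regret :: "(real \<Rightarrow> real) \<Rightarrow> real \<Rightarrow> real \<Rightarrow> (nat \<Rightarrow> real) \<Rightarrow> (nat \<Rightarrow> real)
    \<Rightarrow> (nat \<Rightarrow> real) \<Rightarrow> nat \<Rightarrow> real" where
  "exp_regret G \<alpha> r1 \<eta> p rs T =
     measure_pmf.expectation (obs_pmf p T)
       (\<lambda>obs. \<Sum>i\<in>{1..T}. qloss \<alpha> (imocp G \<alpha> r1 \<eta> p rs obs i) (rs i)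
                          * (if obs i then 1 else 0) / p i)
     - (INF u. \<Sum>i\<in>{1..T}. qloss \<alpha> u (rs i))"

end

theory Submission
  imports Defs
begin



locale dens =
  fixes \<alpha> B \<sigma> M :: real and f :: "real \<Rightarrow> real" and P :: "real measure"
  assumes alpha: "0 < \<alpha>" "\<alpha> < 1"
    and B: "0 < B"
    and dens_meas: "f \<in> borel_measurable borel"
    and dens_nonneg: "\<And>x. 0 \<le> f x"
    and dens_supp: "\<And>x. x \<notin> {0..B} \<Longrightarrow> f x = 0"
    and dens_bdd: "\<And>x. f x \<le> M"
    and P_def: "P = density lborel (\<lambda>x. ennreal (f x))"
    and P_prob: "prob_space P"
    and sigma: "0 < \<sigma>"
begin

lemma M_nonneg: "0 \<le> M" using dens_nonneg[of 0] dens_bdd[of 0] by linarith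

lemma sets_P[simp, measurable_cong]: "sets P = sets borel"
  by (simp add: P_def)

lemma space_P[simp]: "space P = UNIV"
  by (simp add: P_def)

lemma AE_supp: "AE x in P. 0 \<le> x \<and> x \<le> B"
proof -
  have "AE x in lborel. 0 < ennreal (f x) \<longrightarrow> 0 \<le> x \<and> x \<le> B"
    using dens_supp by (intro AE_I2) (metis atLeastAtMost_iff ennreal_0 less_irrefl)
  thus ?thesis unfolding P_def using dens_meas
    by (subst AE_density) (auto simp: measurable_lborel1)
qed

lemma meas_int: assumes "a \<le> b" shows "measure P {a<..b} \<le> M * (b - a)"
proof -
  have "emeasure P {a<..b} = (\<integral>\<^sup>+ x. ennreal (f x) * indicator {a<..b} x \<partial>lborel)"
    unfolding P_def using dens_meas by (subst emeasure_density) (auto simp: measurable_lborel1)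
  also have "\<dots> \<le> (\<integral>\<^sup>+ x. ennreal M * indicator {a<..b} x \<partial>lborel)"
    by (intro nn_integral_mono) (auto simp: indicator_def dens_bdd ennreal_leI)
  also have "\<dots> = ennreal M * ennreal (b - a)"
    using assms by (subst nn_integral_cmult_indicator) auto
  also have "\<dots> = ennreal (M * (b - a))" using M_nonneg assms by (simp add: ennreal_mult)
  finally have "emeasure P {a<..b} \<le> ennreal (M * (b - a))" .
  thus ?thesis unfolding measure_def using M_nonneg assms
    by (simp add: enn2real_leI)
qed

interpretation P: prob_space P by (rule P_prob)

lemma integrable_P:
  fixes K :: real
  assumes "g \<in> borel_measurable borel" "\<And>x. 0 \<le> x \<Longrightarrow> x \<le> B \<Longrightarrow> \<bar>g x\<bar> \<le> K"
  shows "integrable P g"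
  apply (rule P.integrable_const_bound[where B=K])
  using AE_supp apply (rule AE_mp) using assms(2) apply (intro AE_I2) apply auto[1]
  using assms(1) by simp

definition dq :: "real \<Rightarrow> real \<Rightarrow> real" where
  "dq r x = \<alpha> - (if r < x then 1 else 0)"

lemma qloss_meas[measurable]: "qloss \<alpha> r \<in> borel_measurable borel"
  unfolding qloss_def by measurable

lemma dq_meas[measurable]: "dq r \<in> borel_measurable borel"
  unfolding dq_def by measurable

lemma int_qloss: "integrable P (qloss \<alpha> r)"
proof (rule integrable_P[where K="\<bar>r\<bar> + B"])
  fix x assume x: "0 \<le> x" "x \<le> B"
  have "\<bar>qloss \<alpha> r x\<bar> = \<bar>\<alpha> - (if r < x then 1 else 0)\<bar> * \<bar>r - x\<bar>"
    by (simp add: qloss_def abs_mult)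
  also have "\<dots> \<le> 1 * \<bar>r - x\<bar>" using alpha by (intro mult_right_mono) auto
  also have "\<dots> \<le> \<bar>r\<bar> + B" using x by auto
  finally show "\<bar>qloss \<alpha> r x\<bar> \<le> \<bar>r\<bar> + B" .
qed simp

lemma int_dq: "integrable P (dq r)"
  apply (rule integrable_P[where K="1"])
  using alpha by (auto simp: dq_def)

lemma qloss_sub: "qloss \<alpha> s x \<ge> qloss \<alpha> r x + dq r x * (s - r)"
  unfolding qloss_def dq_def by (auto simp: algebra_simps)

lemma qloss_err: "qloss \<alpha> s x - qloss \<alpha> r x - dq r x * (s - r)
   \<le> \<bar>s - r\<bar> * indicator {min r s<..max r s} x"
  unfolding qloss_def dq_def by (auto simp: algebra_simps indicator_def)

definition Q :: "real \<Rightarrow> real" where "Q r = (\<integral>x. qloss \<alpha> r x \<partial>P)"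
definition D :: "real \<Rightarrow> real" where "D r = (\<integral>x. dq r x \<partial>P)"

lemma Q_sub: "Q s \<ge> Q r + D r * (s - r)"
proof -
  have "Q r + D r * (s - r) = (\<integral>x. qloss \<alpha> r x + dq r x * (s - r) \<partial>P)"
    unfolding Q_def D_def using int_qloss int_dq by simp
  also have "\<dots> \<le> Q s" unfolding Q_def
    by (intro integral_mono) (auto intro!: int_qloss int_dq qloss_sub integrable_add integrable_mult_left integrable_mult_right)
  finally show ?thesis .
qed

lemma Q_err: "Q s - Q r - D r * (s - r) \<le> M * (s - r)\<^sup>2"
proof -
  have "Q s - Q r - D r * (s - r) = (\<integral>x. qloss \<alpha> s x - qloss \<alpha> r x - dq r x * (s - r) \<partial>P)"
    unfolding Q_def D_def using int_qloss int_dq by simp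
  also have "\<dots> \<le> (\<integral>x. \<bar>s - r\<bar> * indicator {min r s<..max r s} x \<partial>P)"
  proof (rule integral_mono)
    show "integrable P (\<lambda>x. qloss \<alpha> s x - qloss \<alpha> r x - dq r x * (s - r))"
      using int_qloss[of s] int_qloss[of r] int_dq[of r] by auto
    show "integrable P (\<lambda>x. \<bar>s - r\<bar> * indicator {min r s<..max r s} x)"
      by (intro integrable_mult_right integrable_real_indicator) (auto simp: P.emeasure_finite top.not_eq_extremum[symmetric] less_top[symmetric])
  qed (rule qloss_err)
  also have "\<dots> = \<bar>s - r\<bar> * measure P {min r s<..max r s}" by simp
  also have "\<dots> \<le> \<bar>s - r\<bar> * (M * (max r s - min r s))"
    by (intro mult_left_mono meas_int) auto
  also have "\<dots> = M * (s - r)\<^sup>2" by (auto simp: max_def min_def power2_eq_square algebra_simps)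
  finally show ?thesis .
qed

lemma deriv_from_quad:
  fixes \<phi> :: "real \<Rightarrow> real"
  assumes "\<And>s. \<bar>\<phi> s - \<phi> r - d * (s - r)\<bar> \<le> K * (s - r)\<^sup>2"
  shows "(\<phi> has_real_derivative d) (at r)"
proof -
  have "((\<lambda>y. (\<phi> y - \<phi> r) / (y - r) - d) \<longlongrightarrow> 0) (at r)"
  proof (rule Lim_null_comparison)
    show "\<forall>\<^sub>F y in at r. norm ((\<phi> y - \<phi> r) / (y - r) - d) \<le> K * \<bar>y - r\<bar>"
    unfolding eventually_at_filter
    proof (rule always_eventually, intro allI impI)
      fix y assume "y \<noteq> r" "y \<in> UNIV"
      then have "(\<phi> y - \<phi> r) / (y - r) - d = (\<phi> y - \<phi> r - d * (y - r)) / (y - r)"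
        by (simp add: field_simps)
      also have "norm \<dots> \<le> K * (y - r)\<^sup>2 / \<bar>y - r\<bar>"
        using assms[of y] \<open>y \<noteq> r\<close> by (simp add: divide_right_mono abs_divide)
      also have "\<dots> = K * \<bar>y - r\<bar>"
      proof -
        have e: "(y - r)\<^sup>2 = \<bar>y - r\<bar> * \<bar>y - r\<bar>" by (simp add: power2_eq_square)
        have "\<bar>y - r\<bar> \<noteq> 0" using \<open>y \<noteq> r\<close> by simp
        then show ?thesis unfolding e by (simp add: field_simps)
      qed
      finally show "norm ((\<phi> y - \<phi> r) / (y - r) - d) \<le> K * \<bar>y - r\<bar>" .
    qed
    show "((\<lambda>y. K * \<bar>y - r\<bar>) \<longlongrightarrow> 0) (at r)"
      by (rule tendsto_eq_intros refl)+ simp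
  qed
  then have "((\<lambda>y. (\<phi> y - \<phi> r) / (y - r)) \<longlongrightarrow> d) (at r)"
    by (simp add: Lim_null[symmetric])
  then show ?thesis by (simp add: has_field_derivative_iff)
qed

lemma Q_deriv: "(Q has_real_derivative D r) (at r)"
proof (rule deriv_from_quad[where K=M])
  fix s
  have a: "Q s - Q r - D r * (s - r) \<ge> 0" using Q_sub[of r s] by simp
  show "\<bar>Q s - Q r - D r * (s - r)\<bar> \<le> M * (s - r)\<^sup>2" using a Q_err[of s r] by simp
qed

definition G0 :: "real \<Rightarrow> real" where "G0 r = D r + \<sigma> * r"

lemma Rfun_eq: "Rfun P \<alpha> \<sigma> = (\<lambda>r. Q r + \<sigma> / 2 * r\<^sup>2)"
  by (auto simp: Rfun_def Q_def)

lemma R_deriv: "(Rfun P \<alpha> \<sigma> has_real_derivative G0 r) (at r)"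
  unfolding Rfun_eq G0_def
  by (rule derivative_eq_intros Q_deriv refl)+ (simp add: power2_eq_square)

lemma deriv_R: "deriv (Rfun P \<alpha> \<sigma>) = G0"
  using R_deriv DERIV_imp_deriv by blast


lemma D_bnd: "\<alpha> - 1 \<le> D r \<and> D r \<le> \<alpha>"
proof -
  have "(\<integral>x. (\<alpha> - 1) \<partial>P) \<le> D r" unfolding D_def
    by (intro integral_mono int_dq) (auto simp: dq_def)
  moreover have "D r \<le> (\<integral>x. \<alpha> \<partial>P)" unfolding D_def
    by (intro integral_mono int_dq) (auto simp: dq_def)
  ultimately show ?thesis using P.prob_space by simp
qed

lemma D_diff: assumes "r \<le> s" shows "D s - D r = measure P {r<..s}"
proof -
  have "D s - D r = (\<integral>x. dq s x - dq r x \<partial>P)" unfolding D_def using int_dq by simp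
  also have "\<dots> = (\<integral>x. indicator {r<..s} x \<partial>P)"
    using assms by (intro Bochner_Integration.integral_cong) (auto simp: dq_def indicator_def)
  also have "\<dots> = measure P {r<..s}" by simp
  finally show ?thesis .
qed

lemma D_mono: assumes "r \<le> s" shows "D r \<le> D s"
  using D_diff[OF assms] measure_nonneg[of P "{r<..s}"] by linarith

lemma D_lip: "r \<le> s \<Longrightarrow> D s - D r \<le> M * (s - r)"
  using D_diff[of r s] meas_int[of r s] by simp

lemma G0_mono: "a \<le> b \<Longrightarrow> \<sigma> * (b - a) \<le> G0 b - G0 a"
  using D_mono[of a b] unfolding G0_def by (simp add: algebra_simps)

lemma G0_bnd: "\<alpha> - 1 + \<sigma> * r \<le> G0 r" "G0 r \<le> \<alpha> + \<sigma> * r"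
  using D_bnd[of r] unfolding G0_def by auto

lemma D_cont: "continuous_on UNIV D"
proof (rule lipschitz_on_continuous_on)
  show "M-lipschitz_on UNIV D"
  proof (rule lipschitz_onI)
    fix x y :: real
    show "dist (D x) (D y) \<le> M * dist x y"
    proof (cases "x \<le> y")
      case True then show ?thesis using D_lip[of x y] D_mono[of x y] by (simp add: dist_real_def)
    next
      case False then show ?thesis using D_lip[of y x] D_mono[of y x] by (simp add: dist_real_def)
    qed
  qed (rule M_nonneg)
qed

lemma G0_cont: "continuous_on S G0"
  unfolding G0_def
  by (intro continuous_intros continuous_on_subset[OF D_cont]) auto

lemma G0_surj: "surj G0"
proof -
  have "\<exists>x. G0 x = y" for y
  proof -
    define a where "a = (y - \<alpha>) / \<sigma>"
    define b where "b = (y - \<alpha> + 1) / \<sigma>"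
    have "G0 a \<le> y" using G0_bnd(2)[of a] sigma by (simp add: a_def)
    moreover have "y \<le> G0 b" using G0_bnd(1)[of b] sigma by (simp add: b_def)
    moreover have "a \<le> b" using sigma by (simp add: a_def b_def divide_right_mono)
    ultimately show ?thesis using IVT'[of G0 a y b, OF _ _ _ G0_cont] by blast
  qed
  then show ?thesis by (metis surj_def)
qed

lemma G0_inv: "G0 (inv G0 y) = y"
  using G0_surj by (simp add: surj_f_inv_f)

lemma R_sub: "Rfun P \<alpha> \<sigma> r + G0 r * (u - r) \<le> Rfun P \<alpha> \<sigma> u"
proof -
  have "0 \<le> \<sigma> / 2 * (u - r)\<^sup>2" using sigma by simp
  then have "\<sigma> / 2 * r\<^sup>2 + \<sigma> * r * (u - r) \<le> \<sigma> / 2 * u\<^sup>2"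
    by (simp add: power2_eq_square algebra_simps)
  then show ?thesis using Q_sub[of r u] unfolding Rfun_eq G0_def by (simp add: algebra_simps)
qed

end



lemma sbp:
  fixes S e :: "nat \<Rightarrow> real"
  assumes epos: "\<And>t. 1 \<le> t \<Longrightarrow> t \<le> T \<Longrightarrow> 0 < e t"
    and emono: "\<And>t. 1 \<le> t \<Longrightarrow> t < T \<Longrightarrow> e (Suc t) \<le> e t"
    and Sb: "\<And>k. k \<le> T \<Longrightarrow> \<bar>S k\<bar> \<le> W" and S0: "S 0 = 0" and T: "1 \<le> T"
  shows "\<bar>\<Sum>t=1..T. (S t - S (t-1)) / e t\<bar> \<le> 2 * W / e T"
proof -
  have claim: "k \<le> T \<longrightarrow> \<bar>(\<Sum>t=1..k. (S t - S (t-1)) / e t) - S k / e k\<bar> \<le> W * (1 / e k - 1 / e 1)"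
    if "1 \<le> k" for k
    using that
  proof (induction k rule: nat_induct_at_least)
    case base
    then show ?case using S0 by simp
  next
    case (Suc k)
    show ?case
    proof
      assume kT: "Suc k \<le> T"
      have ek: "0 < e k" "0 < e (Suc k)" "e (Suc k) \<le> e k" using epos[of k] epos[of "Suc k"] emono[of k] Suc(1) kT by auto
      have ih: "\<bar>(\<Sum>t=1..k. (S t - S (t-1)) / e t) - S k / e k\<bar> \<le> W * (1 / e k - 1 / e 1)"
        using Suc(2) kT by simp
      have inv: "1 / e k \<le> 1 / e (Suc k)" using ek by (simp add: frac_le)
      have sk: "\<bar>S k\<bar> \<le> W" using Sb[of k] kT by simp
      have "(\<Sum>t=1..Suc k. (S t - S (t-1)) / e t) - S (Suc k) / e (Suc k)
          = ((\<Sum>t=1..k. (S t - S (t-1)) / e t) - S k / e k) + S k * (1 / e k - 1 / e (Suc k))"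
        using Suc(1) by (simp add: sum.cl_ivl_Suc diff_divide_distrib right_diff_distrib)
      also have "\<bar>\<dots>\<bar> \<le> W * (1 / e k - 1 / e 1) + W * (1 / e (Suc k) - 1 / e k)"
      proof -
        have "\<bar>S k * (1 / e k - 1 / e (Suc k))\<bar> = \<bar>S k\<bar> * (1 / e (Suc k) - 1 / e k)"
          using inv by (simp add: abs_mult)
        also have "\<dots> \<le> W * (1 / e (Suc k) - 1 / e k)" using sk inv by (intro mult_right_mono) auto
        finally show ?thesis using ih by linarith
      qed
      also have "\<dots> = W * (1 / e (Suc k) - 1 / e 1)" by (simp add: algebra_simps)
      finally show "\<bar>(\<Sum>t=1..Suc k. (S t - S (t-1)) / e t) - S (Suc k) / e (Suc k)\<bar> \<le> W * (1 / e (Suc k) - 1 / e 1)" .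
    qed
  qed
  have c: "\<bar>(\<Sum>t=1..T. (S t - S (t-1)) / e t) - S T / e T\<bar> \<le> W * (1 / e T - 1 / e 1)"
    using claim[OF T] by simp
  have e1: "0 < e 1" "0 < e T" using epos[of 1] epos[of T] T by auto
  have W0: "0 \<le> W" using Sb[of 0] by simp
  have "\<bar>S T / e T\<bar> = \<bar>S T\<bar> / e T" using e1 by (simp add: abs_divide)
  also have "\<dots> \<le> W / e T" using Sb[of T] e1 by (intro divide_right_mono) auto
  finally have "\<bar>S T / e T\<bar> \<le> W / e T" .
  moreover have "W * (1 / e T - 1 / e 1) \<le> W / e T"
  proof -
    have "0 \<le> W / e 1" using W0 e1 by simp
    thus ?thesis by (simp add: right_diff_distrib)
  qed
  ultimately show ?thesis using c by linarith
qed


lemma qloss_sub': "qloss \<alpha> r x + (\<alpha> - miscov r x) * (u - r) \<le> qloss \<alpha> u x"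
  unfolding qloss_def miscov_def by (auto simp: algebra_simps)

locale alg =
  fixes G R :: "real \<Rightarrow> real" and \<alpha> \<sigma> B c pmin r1 :: real and e p rs :: "nat \<Rightarrow> real"
  assumes G_inv: "\<And>y. G (inv G y) = y"
    and G_mono: "\<And>a b. a \<le> b \<Longrightarrow> \<sigma> * (b - a) \<le> G b - G a"
    and G_lo: "\<And>r. \<alpha> - 1 + \<sigma> * r \<le> G r" and G_hi: "\<And>r. G r \<le> \<alpha> + \<sigma> * r"
    and R_sub: "\<And>u r. R r + G r * (u - r) \<le> R u"
    and alpha: "0 < \<alpha>" "\<alpha> < 1" and sigma: "0 < \<sigma>" and B: "0 < B"
    and rs: "\<And>t. 0 \<le> rs t \<and> rs t \<le> B"
    and p: "\<And>t. pmin \<le> p t \<and> p t \<le> 1" and pmin: "0 < pmin"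
    and r1: "0 \<le> r1" "r1 \<le> B"
    and e: "\<And>t. 1 \<le> t \<Longrightarrow> 0 < e t \<and> e t \<le> c"
begin

definition rr where "rr obs t = imocp G \<alpha> r1 e p rs obs t"
definition gg where "gg obs t = (\<alpha> - miscov (rr obs t) (rs t)) * (if obs t then 1 else 0) / p t"
definition L where "L = G 0 - c / pmin"
definition U where "U = G B + c / pmin"

lemma G_le: assumes "a \<le> b" shows "G a \<le> G b"
proof -
  have "0 \<le> \<sigma> * (b - a)" using sigma assms by simp
  then show ?thesis using G_mono[OF assms] by linarith
qed

lemma c_pos: "0 < c" using e[of 1] by auto

lemma rr_step: assumes "1 \<le> t" shows "G (rr obs (Suc t)) = G (rr obs t) - e t * gg obs t"
proof -
  obtain k where k: "t = Suc k" using assms by (cases t) auto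
  show ?thesis unfolding k rr_def gg_def by (simp add: Let_def G_inv)
qed

lemma rr_1: "rr obs (Suc 0) = r1" by (simp add: rr_def)

lemma gg_bnd: "\<bar>gg obs t\<bar> \<le> 1 / pmin"
proof -
  have pt: "pmin \<le> p t" "0 < p t" using p[of t] pmin by auto
  have "\<bar>gg obs t\<bar> = \<bar>\<alpha> - miscov (rr obs t) (rs t)\<bar> * (if obs t then 1 else 0) / p t"
    using pt by (simp add: gg_def abs_mult abs_divide)
  also have "\<dots> \<le> 1 / p t" using alpha pt
    by (intro divide_right_mono) (auto simp: miscov_def)
  also have "\<dots> \<le> 1 / pmin" using pt pmin by (intro divide_left_mono) auto
  finally show ?thesis .
qed

lemma step_bnd: assumes "1 \<le> t" shows "\<bar>e t * gg obs t\<bar> \<le> c / pmin"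
proof -
  have "\<bar>e t * gg obs t\<bar> = e t * \<bar>gg obs t\<bar>" using e[OF assms] by (simp add: abs_mult)
  also have "\<dots> \<le> c * (1 / pmin)" using e[OF assms] gg_bnd pmin
    by (intro mult_mono) auto
  finally show ?thesis by simp
qed

lemma band: assumes "1 \<le> t" shows "L \<le> G (rr obs t) \<and> G (rr obs t) \<le> U"
  using assms
proof (induction t rule: nat_induct_at_least)
  case base
  have "G 0 \<le> G r1" using G_le[of 0 r1] r1 sigma by simp
  moreover have "G r1 \<le> G B" using G_le[of r1 B] r1 sigma by simp
  moreover have "0 \<le> c / pmin" using c_pos pmin by simp
  ultimately show ?case by (simp add: rr_1 L_def U_def)
next
  case (Suc t)
  let ?y = "G (rr obs t)"
  have st: "G (rr obs (Suc t)) = ?y - e t * gg obs t" by (rule rr_step[OF Suc(1)])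
  have sb: "\<bar>e t * gg obs t\<bar> \<le> c / pmin" by (rule step_bnd[OF Suc(1)])
  have et: "0 < e t" using e[OF Suc(1)] by simp
  have G0B: "G 0 \<le> G B" using G_le[of 0 B] B sigma by simp
  show ?case
  proof (cases "rr obs t > B")
    case True
    then have "miscov (rr obs t) (rs t) = 0" using rs[of t] by (auto simp: miscov_def)
    then have "0 \<le> gg obs t" using alpha p[of t] pmin by (simp add: gg_def)
    then have "0 \<le> e t * gg obs t" using et by simp
    moreover have "G B \<le> ?y" using G_le[of B "rr obs t"] True sigma by simp
    ultimately show ?thesis using st sb Suc(2) G0B unfolding L_def U_def by auto
  next
    case False
    show ?thesis
    proof (cases "rr obs t < 0")
      case True
      then have "miscov (rr obs t) (rs t) = 1" using rs[of t] by (auto simp: miscov_def)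
      then have "gg obs t \<le> 0" using alpha p[of t] pmin by (simp add: gg_def divide_nonpos_pos)
      then have "e t * gg obs t \<le> 0" using et by (simp add: mult_nonneg_nonpos)
      moreover have "?y \<le> G 0" using G_le[of "rr obs t" 0] True sigma by simp
      ultimately show ?thesis using st sb Suc(2) G0B unfolding L_def U_def by auto
    next
      case False2: False
      have "G 0 \<le> ?y" using G_le[of 0 "rr obs t"] False2 sigma by simp
      moreover have "?y \<le> G B" using G_le[of "rr obs t" B] False sigma by simp
      ultimately show ?thesis using st sb unfolding L_def U_def by auto
    qed
  qed
qed

definition Rb where "Rb = \<bar>(U - \<alpha> + 1) / \<sigma>\<bar> + \<bar>(L - \<alpha>) / \<sigma>\<bar> + B"

lemma rr_bnd: assumes "1 \<le> t" shows "\<bar>rr obs t\<bar> \<le> Rb"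
proof -
  have b: "L \<le> G (rr obs t)" "G (rr obs t) \<le> U" using band[OF assms] by auto
  have "\<sigma> * rr obs t \<le> U - \<alpha> + 1" using G_lo[of "rr obs t"] b by linarith
  then have u: "rr obs t \<le> (U - \<alpha> + 1) / \<sigma>" using sigma by (simp add: field_simps)
  have "L - \<alpha> \<le> \<sigma> * rr obs t" using G_hi[of "rr obs t"] b by linarith
  then have l: "(L - \<alpha>) / \<sigma> \<le> rr obs t" using sigma by (simp add: field_simps)
  show ?thesis using u l B unfolding Rb_def by linarith
qed

lemma B_Rb: "B \<le> Rb" unfolding Rb_def by simp


lemma miscov_path:
  assumes T: "1 \<le> T" and emono: "\<And>t. 1 \<le> t \<Longrightarrow> t < T \<Longrightarrow> e (Suc t) \<le> e t"
  shows "\<bar>\<Sum>t=1..T. gg obs t\<bar> \<le> 2 * (U - L) / e T"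
proof -
  define S where "S k = G (rr obs 1) - G (rr obs (Suc k))" for k
  have "(\<Sum>t=1..T. gg obs t) = (\<Sum>t=1..T. (S t - S (t-1)) / e t)"
  proof (rule sum.cong[OF refl])
    fix t assume "t \<in> {1..T}"
    then have t: "1 \<le> t" by simp
    then obtain k where k: "t = Suc k" by (cases t) auto
    have "S t - S (t-1) = e t * gg obs t" using rr_step[OF t, of obs] unfolding S_def k by simp
    then show "gg obs t = (S t - S (t-1)) / e t" using e[OF t] by simp
  qed
  also have "\<bar>\<dots>\<bar> \<le> 2 * (U - L) / e T"
  proof (rule sbp)
    show "\<And>t. 1 \<le> t \<Longrightarrow> t \<le> T \<Longrightarrow> 0 < e t" using e by auto
    show "\<And>k. k \<le> T \<Longrightarrow> \<bar>S k\<bar> \<le> U - L"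
    proof -
      fix k :: nat
      have "L \<le> G (rr obs 1) \<and> G (rr obs 1) \<le> U" by (rule band) simp
      moreover have "L \<le> G (rr obs (Suc k)) \<and> G (rr obs (Suc k)) \<le> U" by (rule band) simp
      ultimately show "\<bar>S k\<bar> \<le> U - L" unfolding S_def by linarith
    qed
    show "S 0 = 0" by (simp add: S_def)
  qed (use T emono in auto)
  finally show ?thesis .
qed

definition Db where "Db u r = R u - R r - G r * (u - r)"

lemma Db_nonneg: "0 \<le> Db u r" using R_sub[of r u] unfolding Db_def by simp

lemma Db_upper: "Db u r \<le> (G u - G r) * (u - r)"
  using R_sub[of u r] unfolding Db_def by (simp add: algebra_simps)

lemma three_point: "(G a - G b) * (a - u) = Db u a - Db u b + Db a b"
  unfolding Db_def by (simp add: algebra_simps)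

lemma strong: "(G a - G b) * (a - b) \<le> (G a - G b)\<^sup>2 / \<sigma>"
proof (cases "b \<le> a")
  case True
  have h: "\<sigma> * (a - b) \<le> G a - G b" using G_mono[OF True] .
  then have "a - b \<le> (G a - G b) / \<sigma>" using sigma by (simp add: field_simps)
  moreover have "0 \<le> G a - G b" using h True sigma by (smt (verit) mult_nonneg_nonneg)
  ultimately have "(G a - G b) * (a - b) \<le> (G a - G b) * ((G a - G b) / \<sigma>)"
    by (intro mult_left_mono) auto
  then show ?thesis by (simp add: power2_eq_square)
next
  case False
  then have ba: "b \<le> a" if "False" using that by simp
  have h: "\<sigma> * (b - a) \<le> G b - G a" using G_mono False by simp
  then have "b - a \<le> (G b - G a) / \<sigma>" using sigma by (simp add: field_simps)
  moreover have "0 \<le> G b - G a" using h False sigma by (smt (verit) mult_nonneg_nonneg)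
  ultimately have "(G b - G a) * (b - a) \<le> (G b - G a) * ((G b - G a) / \<sigma>)"
    by (intro mult_left_mono) auto
  then show ?thesis by (simp add: power2_eq_square algebra_simps)
qed

definition K0 where "K0 = \<alpha> + 1 + \<sigma> * Rb"
definition Dmax where "Dmax = 4 * K0 * Rb"

lemma G_abs: assumes "\<bar>x\<bar> \<le> Rb" shows "\<bar>G x\<bar> \<le> K0"
proof -
  have "\<sigma> * x \<le> \<sigma> * Rb" using assms sigma by (intro mult_left_mono) auto
  moreover have "\<sigma> * (- Rb) \<le> \<sigma> * x" using assms sigma by (intro mult_left_mono) auto
  ultimately have "\<sigma> * x \<le> \<sigma> * Rb" "- (\<sigma> * Rb) \<le> \<sigma> * x" by auto
  then show ?thesis using G_lo[of x] G_hi[of x] alpha unfolding K0_def by (simp add: abs_le_iff)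
qed

lemma Db_bnd: assumes "\<bar>u\<bar> \<le> Rb" "\<bar>r\<bar> \<le> Rb" shows "Db u r \<le> Dmax"
proof -
  have "Db u r \<le> \<bar>G u - G r\<bar> * \<bar>u - r\<bar>" using Db_upper[of u r] by (simp add: abs_mult[symmetric])
  also have "\<dots> \<le> (2 * K0) * (2 * Rb)"
    using G_abs[OF assms(1)] G_abs[OF assms(2)] assms by (intro mult_mono) auto
  finally show ?thesis unfolding Dmax_def by simp
qed

lemma regret_path:
  assumes T: "1 \<le> T" and emono: "\<And>t. 1 \<le> t \<Longrightarrow> t < T \<Longrightarrow> e (Suc t) \<le> e t"
    and u: "\<bar>u\<bar> \<le> Rb"
  shows "(\<Sum>t=1..T. (qloss \<alpha> (rr obs t) (rs t) - qloss \<alpha> u (rs t)) * (if obs t then 1 else 0) / p t)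
     \<le> 2 * Dmax / e T + (\<Sum>t=1..T. e t / (\<sigma> * pmin\<^sup>2))"
proof -
  define d where "d k = Db u (rr obs k)" for k
  have trm: "(qloss \<alpha> (rr obs t) (rs t) - qloss \<alpha> u (rs t)) * (if obs t then 1 else 0) / p t
      \<le> (d t - d (Suc t)) / e t + e t / (\<sigma> * pmin\<^sup>2)" if t: "1 \<le> t" for t
  proof -
    let ?r = "rr obs t" and ?r' = "rr obs (Suc t)"
    have pt: "0 < p t" using p[of t] pmin by auto
    have et: "0 < e t" using e[OF t] by simp
    have "(qloss \<alpha> ?r (rs t) - qloss \<alpha> u (rs t)) * (if obs t then 1 else 0) / p t
        \<le> ((\<alpha> - miscov ?r (rs t)) * (?r - u)) * (if obs t then 1 else 0) / p t"
      using qloss_sub'[where \<alpha>=\<alpha> and r="?r" and x="rs t" and u=u] pt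
      by (intro divide_right_mono mult_right_mono) (auto simp: algebra_simps)
    also have "\<dots> = gg obs t * (?r - u)" by (simp add: gg_def)
    also have "gg obs t = (G ?r - G ?r') / e t" using rr_step[OF t, of obs] et by simp
    also have "(G ?r - G ?r') / e t * (?r - u) = (d t - d (Suc t) + Db ?r ?r') / e t"
      using three_point[of ?r ?r' u] unfolding d_def by simp
    also have "\<dots> = (d t - d (Suc t)) / e t + Db ?r ?r' / e t" by (simp add: add_divide_distrib)
    also have "Db ?r ?r' / e t \<le> e t / (\<sigma> * pmin\<^sup>2)"
    proof -
      have "Db ?r ?r' \<le> (G ?r - G ?r')\<^sup>2 / \<sigma>" using Db_upper[of ?r ?r'] strong[of ?r ?r'] by linarith
      also have "(G ?r - G ?r')\<^sup>2 = (e t * gg obs t)\<^sup>2" using rr_step[OF t, of obs] by simp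
      also have "\<dots> = (e t)\<^sup>2 * (gg obs t)\<^sup>2" by (simp add: power_mult_distrib)
      also have "(gg obs t)\<^sup>2 \<le> (1 / pmin)\<^sup>2" using gg_bnd[of obs t]
        by (metis abs_ge_zero power2_abs power_mono)
      finally have "Db ?r ?r' \<le> (e t)\<^sup>2 * (1 / pmin)\<^sup>2 / \<sigma>" using sigma
        by (simp add: divide_right_mono mult_left_mono)
      then have "Db ?r ?r' / e t \<le> (e t)\<^sup>2 * (1 / pmin)\<^sup>2 / \<sigma> / e t" using et by (intro divide_right_mono) auto
      also have "\<dots> = e t / (\<sigma> * pmin\<^sup>2)" using et by (simp add: power2_eq_square field_simps)
      finally show ?thesis .
    qed
    finally show ?thesis by simp
  qed
  have "(\<Sum>t=1..T. (qloss \<alpha> (rr obs t) (rs t) - qloss \<alpha> u (rs t)) * (if obs t then 1 else 0) / p t)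
      \<le> (\<Sum>t=1..T. (d t - d (Suc t)) / e t + e t / (\<sigma> * pmin\<^sup>2))"
    by (intro sum_mono trm) simp
  also have "\<dots> = (\<Sum>t=1..T. (d t - d (Suc t)) / e t) + (\<Sum>t=1..T. e t / (\<sigma> * pmin\<^sup>2))"
    by (simp add: sum.distrib)
  also have "(\<Sum>t=1..T. (d t - d (Suc t)) / e t) \<le> 2 * Dmax / e T"
  proof -
    define S where "S k = d 1 - d (Suc k)" for k
    have "(\<Sum>t=1..T. (d t - d (Suc t)) / e t) = (\<Sum>t=1..T. (S t - S (t-1)) / e t)"
    proof (rule sum.cong[OF refl])
      fix t assume "t \<in> {1..T}"
      then obtain k where k: "t = Suc k" by (cases t) auto
      show "(d t - d (Suc t)) / e t = (S t - S (t-1)) / e t" unfolding S_def k by simp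
    qed
    also have "\<dots> \<le> \<bar>\<dots>\<bar>" by simp
    also have "\<dots> \<le> 2 * Dmax / e T"
    proof (rule sbp)
      show "\<And>t. 1 \<le> t \<Longrightarrow> t \<le> T \<Longrightarrow> 0 < e t" using e by auto
      show "\<And>k. k \<le> T \<Longrightarrow> \<bar>S k\<bar> \<le> Dmax"
      proof -
        fix k :: nat
        have "0 \<le> d 1" "d 1 \<le> Dmax" using Db_nonneg Db_bnd[OF u rr_bnd[of 1]] unfolding d_def by auto
        moreover have "0 \<le> d (Suc k)" "d (Suc k) \<le> Dmax"
          using Db_nonneg Db_bnd[OF u rr_bnd[of "Suc k"]] unfolding d_def by auto
        ultimately show "\<bar>S k\<bar> \<le> Dmax" unfolding S_def by linarith
      qed
      show "S 0 = 0" by (simp add: S_def)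
    qed (use T emono in auto)
    finally show ?thesis .
  qed
  finally show ?thesis by simp
qed

end




lemma int_pmf:
  fixes g :: "'a \<Rightarrow> real"
  assumes "\<And>x. \<bar>g x\<bar> \<le> K"
  shows "integrable (measure_pmf M) g"
  by (rule measure_pmf.integrable_const_bound[where B=K]) (use assms in auto)

lemma pair_prod:
  fixes g :: "'a \<Rightarrow> real" and h :: "'b \<Rightarrow> real"
  assumes g: "\<And>a. 0 \<le> g a" "\<And>a. g a \<le> Ka" and h: "\<And>b. 0 \<le> h b" "\<And>b. h b \<le> Kb"
  shows "measure_pmf.expectation (pair_pmf A Bm) (\<lambda>z. g (fst z) * h (snd z))
       = measure_pmf.expectation A g * measure_pmf.expectation Bm h"
proof -
  have ig: "integrable (measure_pmf A) g" using g by (intro int_pmf[where K=Ka]) (auto simp: abs_le_iff)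
  have ih: "integrable (measure_pmf Bm) h" using h by (intro int_pmf[where K=Kb]) (auto simp: abs_le_iff)
  have igh: "integrable (measure_pmf (pair_pmf A Bm)) (\<lambda>z. g (fst z) * h (snd z))"
  proof (rule int_pmf[where K="Ka * Kb"])
    fix z :: "'a \<times> 'b"
    show "\<bar>g (fst z) * h (snd z)\<bar> \<le> Ka * Kb"
      using g(1)[of "fst z"] g(2)[of "fst z"] h(1)[of "snd z"] h(2)[of "snd z"]
      by (simp add: abs_mult) (rule mult_mono; auto)
  qed
  have "ennreal (measure_pmf.expectation (pair_pmf A Bm) (\<lambda>z. g (fst z) * h (snd z)))
      = (\<integral>\<^sup>+z. ennreal (g (fst z) * h (snd z)) \<partial>pair_pmf A Bm)"
    using igh g h by (subst nn_integral_eq_integral) auto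
  also have "\<dots> = (\<integral>\<^sup>+a. \<integral>\<^sup>+b. ennreal (g a) * ennreal (h b) \<partial>Bm \<partial>A)"
    using g h by (simp add: nn_integral_pair_pmf' ennreal_mult)
  also have "\<dots> = (\<integral>\<^sup>+a. ennreal (g a) * (\<integral>\<^sup>+b. ennreal (h b) \<partial>Bm) \<partial>A)"
    by (simp add: nn_integral_cmult)
  also have "\<dots> = (\<integral>\<^sup>+a. ennreal (g a) \<partial>A) * (\<integral>\<^sup>+b. ennreal (h b) \<partial>Bm)"
    by (simp add: nn_integral_multc)
  also have "\<dots> = ennreal (measure_pmf.expectation A g) * ennreal (measure_pmf.expectation Bm h)"
    using ig ih g h by (subst (1 2) nn_integral_eq_integral) auto
  also have "\<dots> = ennreal (measure_pmf.expectation A g * measure_pmf.expectation Bm h)"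
    using g h by (simp add: ennreal_mult integral_nonneg_AE)
  finally show ?thesis
    using g h by (subst (asm) ennreal_inj) (auto intro!: integral_nonneg_AE mult_nonneg_nonneg)
qed

lemma indep_insert:
  fixes h :: "('i \<Rightarrow> 'v) \<Rightarrow> real" and \<phi> :: "'v \<Rightarrow> real"
  assumes A: "finite A" "t \<notin> A"
    and hinv: "\<And>f y. h (f(t := y)) = h f"
    and h: "\<And>f. 0 \<le> h f" "\<And>f. h f \<le> Ka" and \<phi>: "\<And>y. 0 \<le> \<phi> y" "\<And>y. \<phi> y \<le> Kb"
  shows "measure_pmf.expectation (Pi_pmf (insert t A) dflt q) (\<lambda>f. h f * \<phi> (f t))
       = measure_pmf.expectation (q t) \<phi> * measure_pmf.expectation (Pi_pmf A dflt q) h"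
    and "measure_pmf.expectation (Pi_pmf (insert t A) dflt q) h
       = measure_pmf.expectation (Pi_pmf A dflt q) h"
proof -
  have "measure_pmf.expectation (Pi_pmf (insert t A) dflt q) (\<lambda>f. h f * \<phi> (f t))
      = measure_pmf.expectation (pair_pmf (q t) (Pi_pmf A dflt q)) (\<lambda>z. \<phi> (fst z) * h (snd z))"
    using A by (simp add: Pi_pmf_insert case_prod_unfold hinv mult.commute)
  also have "\<dots> = measure_pmf.expectation (q t) \<phi> * measure_pmf.expectation (Pi_pmf A dflt q) h"
    by (rule pair_prod[OF \<phi> h])
  finally show "measure_pmf.expectation (Pi_pmf (insert t A) dflt q) (\<lambda>f. h f * \<phi> (f t))
       = measure_pmf.expectation (q t) \<phi> * measure_pmf.expectation (Pi_pmf A dflt q) h" .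
  have "measure_pmf.expectation (Pi_pmf (insert t A) dflt q) h
      = measure_pmf.expectation (pair_pmf (q t) (Pi_pmf A dflt q)) (\<lambda>z. h (snd z))"
    using A by (simp add: Pi_pmf_insert case_prod_unfold hinv)
  also have "\<dots> = measure_pmf.expectation (Pi_pmf A dflt q) h" by simp
  finally show "measure_pmf.expectation (Pi_pmf (insert t A) dflt q) h
       = measure_pmf.expectation (Pi_pmf A dflt q) h" .
qed

lemma exp_obs:
  assumes "t \<in> {1..T}" "0 \<le> p t" "p t \<le> 1"
  shows "measure_pmf.expectation (obs_pmf p T) (\<lambda>obs. if obs t then 1 else 0 :: real) = p t"
proof -
  have "measure_pmf.expectation (obs_pmf p T) (\<lambda>obs. if obs t then 1 else 0 :: real)
      = measure_pmf.expectation (map_pmf (\<lambda>f. f t) (obs_pmf p T)) (\<lambda>b. if b then 1 else 0 :: real)"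
    by simp
  also have "map_pmf (\<lambda>f. f t) (obs_pmf p T) = bernoulli_pmf (p t)"
    unfolding obs_pmf_def using assms by (subst Pi_pmf_component) auto
  finally show ?thesis using assms by simp
qed

lemma exp_indep:
  fixes h :: "(nat \<Rightarrow> bool) \<Rightarrow> real"
  assumes t: "t \<in> {1..T}" and pt: "0 \<le> p t" "p t \<le> 1"
    and hinv: "\<And>f y. h (f(t := y)) = h f"
    and h: "\<And>f. 0 \<le> h f" "\<And>f. h f \<le> Ka"
  shows "measure_pmf.expectation (obs_pmf p T) (\<lambda>f. h f * (if f t then 1 else 0))
       = p t * measure_pmf.expectation (obs_pmf p T) h"
proof -
  define A where "A = {1..T} - {t}"
  have eq: "{1..T} = insert t A" using t by (auto simp: A_def)
  have A: "finite A" "t \<notin> A" by (auto simp: A_def)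
  have "measure_pmf.expectation (obs_pmf p T) (\<lambda>f. h f * (if f t then 1 else 0))
      = measure_pmf.expectation (bernoulli_pmf (p t)) (\<lambda>b. if b then 1 else 0 :: real)
        * measure_pmf.expectation (Pi_pmf A False (\<lambda>t. bernoulli_pmf (p t))) h"
    unfolding obs_pmf_def eq
    by (rule indep_insert(1)[where Kb=1 and \<phi>="\<lambda>b. if b then 1 else 0" and dflt=False and q="\<lambda>t. bernoulli_pmf (p t)", OF A hinv h]) auto
  also have "\<dots> = p t * measure_pmf.expectation (obs_pmf p T) h"
    unfolding obs_pmf_def eq using pt
    by (subst indep_insert(2)[where Kb=1 and \<phi>="\<lambda>_. 1" and Ka=Ka, OF A hinv h]) auto
  finally show ?thesis .
qed

lemma sum_powr:
  fixes \<beta> :: real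
  assumes beta: "0 < \<beta>" "\<beta> < 1" and T: "1 \<le> T"
  shows "(\<Sum>t=1..T. real t powr (-\<beta>)) \<le> real T powr (1 - \<beta>) / (1 - \<beta>)"
  using T
proof (induction T rule: nat_induct_at_least)
  case base
  then show ?case using beta by (simp add: field_simps)
next
  case (Suc T)
  have "\<exists>z. real T < z \<and> z < real (Suc T) \<and>
     real (Suc T) powr (1 - \<beta>) - real T powr (1 - \<beta>) = (real (Suc T) - real T) * ((1 - \<beta>) * z powr (1 - \<beta> - 1))"
  proof (rule MVT2[of "real T" "real (Suc T)" "\<lambda>a. a powr (1-\<beta>)" "\<lambda>x. (1-\<beta>) * x powr (1-\<beta>-1)"])
    fix x assume "real T \<le> x" "x \<le> real (Suc T)"
    then have "0 < x" using Suc(1) by simp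
    then show "((\<lambda>a. a powr (1-\<beta>)) has_real_derivative (1-\<beta>) * x powr (1-\<beta>-1)) (at x)"
      by (rule has_real_derivative_powr)
  qed simp
  then obtain z where z: "real T < z" "z < real (Suc T)"
    "real (Suc T) powr (1 - \<beta>) - real T powr (1 - \<beta>) = (1 - \<beta>) * z powr (- \<beta>)" by auto
  have "real (Suc T) powr (-\<beta>) \<le> z powr (-\<beta>)"
    using z Suc(1) beta by (intro powr_mono2') auto
  then have "(1 - \<beta>) * real (Suc T) powr (-\<beta>) \<le> real (Suc T) powr (1 - \<beta>) - real T powr (1 - \<beta>)"
    using z(3) beta by (simp add: mult_left_mono)
  then have "real (Suc T) powr (-\<beta>) \<le> (real (Suc T) powr (1 - \<beta>) - real T powr (1 - \<beta>)) / (1 - \<beta>)"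
    using beta by (simp add: pos_le_divide_eq mult.commute)
  then have "real (Suc T) powr (-\<beta>) \<le> real (Suc T) powr (1 - \<beta>) / (1 - \<beta>) - real T powr (1 - \<beta>) / (1 - \<beta>)"
    by (simp add: diff_divide_distrib)
  moreover have "(\<Sum>t=1..Suc T. real t powr (-\<beta>)) = (\<Sum>t=1..T. real t powr (-\<beta>)) + real (Suc T) powr (-\<beta>)"
    by (simp add: sum.cl_ivl_Suc)
  ultimately show ?case using Suc(2) by linarith
qed


lemma imocp_cong:
  "(\<And>s. s < t \<Longrightarrow> obs s = obs' s) \<Longrightarrow> imocp G \<alpha> r1 e p rs obs t = imocp G \<alpha> r1 e p rs obs' t"
proof (induction G \<alpha> r1 e p rs obs t rule: imocp.induct)
  case (3 G \<alpha> r1 \<eta> p rs obs t)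
  have "imocp G \<alpha> r1 \<eta> p rs obs (Suc t) = imocp G \<alpha> r1 \<eta> p rs obs' (Suc t)"
    using 3 by auto
  moreover have "obs (Suc t) = obs' (Suc t)" using 3 by auto
  ultimately show ?case by (simp add: Let_def)
qed auto

lemma qloss_abs: "0 < \<alpha> \<Longrightarrow> \<alpha> < 1 \<Longrightarrow> \<bar>qloss \<alpha> r x\<bar> \<le> \<bar>r\<bar> + \<bar>x\<bar>"
proof -
  assume a: "0 < \<alpha>" "\<alpha> < 1"
  have "\<bar>qloss \<alpha> r x\<bar> = \<bar>\<alpha> - (if r < x then 1 else 0)\<bar> * \<bar>r - x\<bar>"
    by (simp add: qloss_def abs_mult)
  also have "\<dots> \<le> 1 * \<bar>r - x\<bar>" using a by (intro mult_right_mono) auto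
  finally show ?thesis by simp
qed

lemma qloss_clamp:
  assumes "0 < \<alpha>" "\<alpha> < 1" "0 \<le> x" "x \<le> B"
  shows "qloss \<alpha> (max 0 (min B v)) x \<le> qloss \<alpha> v x"
  using assms unfolding qloss_def
  by (auto simp: max_def min_def algebra_simps intro: mult_left_mono mult_right_mono)

lemma exp_abs_le:
  fixes g :: "'a \<Rightarrow> real"
  assumes "\<And>x. \<bar>g x\<bar> \<le> K"
  shows "\<bar>measure_pmf.expectation M g\<bar> \<le> K"
proof -
  have i: "integrable (measure_pmf M) g" by (rule int_pmf[OF assms])
  have "measure_pmf.expectation M g \<le> measure_pmf.expectation M (\<lambda>_. K)"
    using assms by (intro integral_mono i) (auto simp: abs_le_iff)
  moreover have "measure_pmf.expectation M (\<lambda>_. -K) \<le> measure_pmf.expectation M g"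
    using assms by (intro integral_mono i) (auto simp: abs_le_iff, smt (verit))
  ultimately show ?thesis by simp
qed

lemma weight_abs:
  fixes a pt pm :: real
  assumes "\<bar>a\<bar> \<le> K" "0 < pm" "pm \<le> pt"
  shows "\<bar>a * (if b then 1 else 0) / pt\<bar> \<le> K / pm"
proof -
  have K: "0 \<le> K" using assms(1) by linarith
  have "\<bar>a * (if b then 1 else 0) / pt\<bar> \<le> \<bar>a\<bar> / pt"
    using assms by (auto simp: abs_mult abs_divide)
  also have "\<dots> \<le> K / pt" using assms by (intro divide_right_mono) auto
  also have "\<dots> \<le> K / pm" using assms K by (intro divide_left_mono) auto
  finally show ?thesis .
qed




theorem corollary1:
  fixes \<alpha> B \<sigma> pmin c \<beta> r1 :: real
    and rs p :: "nat \<Rightarrow> real"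
    and f :: "real \<Rightarrow> real"
    and P :: "real measure"
    and \<eta> :: "nat \<Rightarrow> nat \<Rightarrow> real"
  assumes alpha: "0 < \<alpha>" "\<alpha> < 1"
    and B: "0 < B"
    and rs: "\<And>t. 0 \<le> rs t \<and> rs t \<le> B"
    and dens_meas: "f \<in> borel_measurable borel"
    and dens_nonneg: "\<And>x. 0 \<le> f x"
    and dens_supp: "\<And>x. x \<notin> {0..B} \<Longrightarrow> f x = 0"
    and dens_bdd: "\<exists>M. \<forall>x. f x \<le> M"
    and P_def: "P = density lborel (\<lambda>x. ennreal (f x))"
    and P_prob: "prob_space P"
    and sigma: "0 < \<sigma>"
    and p: "\<And>t. pmin \<le> p t \<and> p t \<le> 1"
    and pmin: "0 < pmin"
    and r1: "0 \<le> r1" "r1 \<le> B"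
    and c: "0 < c"
    and beta: "0 < \<beta>" "\<beta> < 1"
    and step: "\<eta> = (\<lambda>T t. c * real T powr (-\<beta>)) \<or> \<eta> = (\<lambda>T t. c * real t powr (-\<beta>))"
  shows "\<exists>A C. \<forall>T\<ge>1.
      \<bar>exp_miscov (deriv (Rfun P \<alpha> \<sigma>)) \<alpha> r1 (\<eta> T) p rs T - \<alpha>\<bar> \<le> A * real T powr (-(1 - \<beta>))
    \<and> exp_regret (deriv (Rfun P \<alpha> \<sigma>)) \<alpha> r1 (\<eta> T) p rs T \<le> C * real T powr (max \<beta> (1 - \<beta>))"
proof -
  obtain M where M: "\<And>x. f x \<le> M" using dens_bdd by blast
  interpret Dn: dens \<alpha> B \<sigma> M f P
  proof (rule dens.intro)
    show "\<And>x. x \<notin> {0..B} \<Longrightarrow> f x = 0" by (rule dens_supp)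
  qed (fact alpha B dens_meas dens_nonneg M P_def P_prob sigma)+
  define G where "G = Dn.G0"
  have Gd: "deriv (Rfun P \<alpha> \<sigma>) = G" unfolding G_def by (rule Dn.deriv_R)
  define L0 where "L0 = G 0 - c / pmin"
  define U0 where "U0 = G B + c / pmin"
  define Rb0 where "Rb0 = \<bar>(U0 - \<alpha> + 1) / \<sigma>\<bar> + \<bar>(L0 - \<alpha>) / \<sigma>\<bar> + B"
  define K00 where "K00 = \<alpha> + 1 + \<sigma> * Rb0"
  define Dm where "Dm = 4 * K00 * Rb0"
  define A where "A = 2 * (U0 - L0) / c"
  define C where "C = 2 * Dm / c + c / ((1 - \<beta>) * \<sigma> * pmin\<^sup>2)"
  have Rb0: "0 \<le> Rb0" unfolding Rb0_def using B by simp
  have Dm: "0 \<le> Dm" unfolding Dm_def K00_def using Rb0 alpha sigma by simp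
  show ?thesis
  proof (intro exI allI impI conjI)
    fix T :: nat assume T: "1 \<le> T"
    define e where "e = \<eta> T"
    have Tpos: "0 < real T" using T by simp
    have Tb: "real T powr (-\<beta>) \<le> 1"
      using powr_mono[of "-\<beta>" 0 "real T"] T beta by simp
    have tb: "0 < real t powr (-\<beta>) \<and> real t powr (-\<beta>) \<le> 1" if "1 \<le> t" for t :: nat
      using powr_mono[of "-\<beta>" 0 "real t"] that beta by simp
    have e_pos: "0 < e t \<and> e t \<le> c" if "1 \<le> t" for t
      using step
    proof
      assume "\<eta> = (\<lambda>T t. c * real T powr (-\<beta>))"
      then show ?thesis unfolding e_def using tb[OF T] c by (simp add: mult_left_le)
    next
      assume "\<eta> = (\<lambda>T t. c * real t powr (-\<beta>))"
      then show ?thesis unfolding e_def using tb[OF that] c by (simp add: mult_left_le)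
    qed
    have e_mono: "e (Suc t) \<le> e t" if "1 \<le> t" for t
      using step
    proof
      assume "\<eta> = (\<lambda>T t. c * real T powr (-\<beta>))"
      then show ?thesis unfolding e_def by simp
    next
      assume "\<eta> = (\<lambda>T t. c * real t powr (-\<beta>))"
      moreover have "real (Suc t) powr (-\<beta>) \<le> real t powr (-\<beta>)"
        using that beta by (intro powr_mono2') auto
      ultimately show ?thesis unfolding e_def using c by simp
    qed
    have e_T: "e T = c * real T powr (-\<beta>)" using step unfolding e_def by auto
    have e_sum: "(\<Sum>t=1..T. e t) \<le> c * real T powr (1 - \<beta>) / (1 - \<beta>)"
      using step
    proof
      assume "\<eta> = (\<lambda>T t. c * real T powr (-\<beta>))"
      then have "(\<Sum>t=1..T. e t) = c * (real T * real T powr (-\<beta>))" unfolding e_def by simp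
      also have "real T * real T powr (-\<beta>) = real T powr (1 - \<beta>)"
        using Tpos by (simp add: powr_diff powr_minus divide_inverse)
      also have "c * real T powr (1 - \<beta>) \<le> c * real T powr (1 - \<beta>) / (1 - \<beta>)"
      proof -
        have "0 \<le> c * real T powr (1 - \<beta>)" using c by simp
        then have "c * real T powr (1 - \<beta>) * (1 - \<beta>) \<le> c * real T powr (1 - \<beta>)"
          using beta by (simp add: mult_left_le)
        then show ?thesis using beta by (simp add: le_divide_eq)
      qed
      finally show ?thesis .
    next
      assume "\<eta> = (\<lambda>T t. c * real t powr (-\<beta>))"
      then have "(\<Sum>t=1..T. e t) = c * (\<Sum>t=1..T. real t powr (-\<beta>))"
        unfolding e_def by (simp add: sum_distrib_left)
      also have "\<dots> \<le> c * (real T powr (1 - \<beta>) / (1 - \<beta>))"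
        using sum_powr[OF beta T] c by (intro mult_left_mono) auto
      finally show ?thesis by simp
    qed
    interpret Al: alg G "Rfun P \<alpha> \<sigma>" \<alpha> \<sigma> B c pmin r1 e p rs
      unfolding G_def
    proof (rule alg.intro)
      show "\<And>t. 1 \<le> t \<Longrightarrow> 0 < e t \<and> e t \<le> c" by (rule e_pos)
    qed (fact Dn.G0_inv Dn.G0_mono Dn.G0_bnd Dn.R_sub alpha sigma B rs p pmin r1)+
    have UL: "Al.U = U0" "Al.L = L0" by (simp_all add: Al.U_def U0_def Al.L_def L0_def)
    have RbD: "Al.Rb = Rb0" "Al.Dmax = Dm"
      by (simp_all add: Al.Rb_def Rb0_def UL Al.Dmax_def Dm_def Al.K0_def K00_def)
    let ?\<Omega> = "obs_pmf p T"
    define Et where "Et obs t = miscov (Al.rr obs t) (rs t)" for obs t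
    have ppos: "0 < p t" for t using p[of t] pmin by linarith
    have Et01: "0 \<le> Et obs t" "Et obs t \<le> 1" for obs t by (auto simp: Et_def miscov_def)
    have rr_eq: "imocp (deriv (Rfun P \<alpha> \<sigma>)) \<alpha> r1 (\<eta> T) p rs = Al.rr"
      unfolding Gd e_def[symmetric] by (auto simp: Al.rr_def fun_eq_iff)

    have Egg: "measure_pmf.expectation ?\<Omega> (\<lambda>obs. Al.gg obs t) = \<alpha> - measure_pmf.expectation ?\<Omega> (\<lambda>obs. Et obs t)"
      if t: "t \<in> {1..T}" for t
    proof -
      have io: "integrable (measure_pmf ?\<Omega>) (\<lambda>obs. if obs t then 1 else 0 :: real)"
        by (rule int_pmf[where K=1]) auto
      have ieo: "integrable (measure_pmf ?\<Omega>) (\<lambda>obs. Et obs t * (if obs t then 1 else 0))"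
        by (rule int_pmf[where K=1]) (use Et01 in \<open>auto simp: abs_le_iff\<close>)
      have ind: "measure_pmf.expectation ?\<Omega> (\<lambda>obs. Et obs t * (if obs t then 1 else 0))
          = p t * measure_pmf.expectation ?\<Omega> (\<lambda>obs. Et obs t)"
      proof (rule exp_indep[OF t _ _ _ Et01])
        fix f :: "nat \<Rightarrow> bool" and y
        show "Et (f(t := y)) t = Et f t" unfolding Et_def Al.rr_def
          by (subst imocp_cong[where obs'=f]) auto
      qed (use p[of t] pmin in auto)
      have "(\<lambda>obs. Al.gg obs t) = (\<lambda>obs. (\<alpha> * (if obs t then 1 else 0) - Et obs t * (if obs t then 1 else 0)) / p t)"
        by (auto simp: Al.gg_def Et_def fun_eq_iff algebra_simps)
      then have "measure_pmf.expectation ?\<Omega> (\<lambda>obs. Al.gg obs t)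
          = (\<alpha> * measure_pmf.expectation ?\<Omega> (\<lambda>obs. if obs t then 1 else 0)
             - measure_pmf.expectation ?\<Omega> (\<lambda>obs. Et obs t * (if obs t then 1 else 0))) / p t"
        using io ieo by simp
      also have "\<dots> = (\<alpha> * p t - p t * measure_pmf.expectation ?\<Omega> (\<lambda>obs. Et obs t)) / p t"
        using exp_obs[OF t] p[of t] pmin ind by simp
      also have "\<dots> = \<alpha> - measure_pmf.expectation ?\<Omega> (\<lambda>obs. Et obs t)"
        using ppos[of t] by (simp add: field_simps)
      finally show ?thesis .
    qed
    have igg: "integrable (measure_pmf ?\<Omega>) (\<lambda>obs. Al.gg obs t)" for t
      by (rule int_pmf[where K="1/pmin"]) (rule Al.gg_bnd)
    have iEt: "integrable (measure_pmf ?\<Omega>) (\<lambda>obs. Et obs t)" for t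
      by (rule int_pmf[where K=1]) (use Et01 in \<open>auto simp: abs_le_iff\<close>)
    have "(\<Sum>t=1..T. \<alpha> - measure_pmf.expectation ?\<Omega> (\<lambda>obs. Et obs t))
        = (\<Sum>t=1..T. measure_pmf.expectation ?\<Omega> (\<lambda>obs. Al.gg obs t))"
      by (rule sum.cong[OF refl]) (simp add: Egg)
    also have "\<dots> = measure_pmf.expectation ?\<Omega> (\<lambda>obs. \<Sum>t=1..T. Al.gg obs t)"
      using igg by (simp add: Bochner_Integration.integral_sum)
    finally have sumeq: "(\<Sum>t=1..T. \<alpha> - measure_pmf.expectation ?\<Omega> (\<lambda>obs. Et obs t))
        = measure_pmf.expectation ?\<Omega> (\<lambda>obs. \<Sum>t=1..T. Al.gg obs t)" .
    have "\<bar>measure_pmf.expectation ?\<Omega> (\<lambda>obs. \<Sum>t=1..T. Al.gg obs t)\<bar> \<le> 2 * (U0 - L0) / e T"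
      by (rule exp_abs_le) (use Al.miscov_path[OF T e_mono] UL in auto)
    then have absb: "\<bar>(\<Sum>t=1..T. \<alpha> - measure_pmf.expectation ?\<Omega> (\<lambda>obs. Et obs t))\<bar> \<le> 2 * (U0 - L0) / e T"
      using sumeq by simp
    have em: "exp_miscov (deriv (Rfun P \<alpha> \<sigma>)) \<alpha> r1 (\<eta> T) p rs T
        = (1 / real T) * (\<Sum>t=1..T. measure_pmf.expectation ?\<Omega> (\<lambda>obs. Et obs t))"
      unfolding exp_miscov_def rr_eq Et_def[symmetric]
      using iEt by (simp add: Bochner_Integration.integral_sum)
    have "exp_miscov (deriv (Rfun P \<alpha> \<sigma>)) \<alpha> r1 (\<eta> T) p rs T - \<alpha>
        = - (1 / real T) * (\<Sum>t=1..T. \<alpha> - measure_pmf.expectation ?\<Omega> (\<lambda>obs. Et obs t))"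
      unfolding em using Tpos by (simp add: sum_subtractf field_simps)
    then have "\<bar>exp_miscov (deriv (Rfun P \<alpha> \<sigma>)) \<alpha> r1 (\<eta> T) p rs T - \<alpha>\<bar>
        = (1 / real T) * \<bar>\<Sum>t=1..T. \<alpha> - measure_pmf.expectation ?\<Omega> (\<lambda>obs. Et obs t)\<bar>"
      using Tpos by (simp add: abs_mult)
    also have "\<dots> \<le> (1 / real T) * (2 * (U0 - L0) / e T)"
      using absb Tpos by (intro mult_left_mono) auto
    also have "\<dots> = A * real T powr (-(1 - \<beta>))"
    proof -
      have e1: "real T powr (-(1 - \<beta>)) = real T powr \<beta> / real T"
        using Tpos by (simp add: powr_diff)
      have e2: "real T powr (-\<beta>) = 1 / real T powr \<beta>" by (simp add: powr_minus divide_inverse)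
      have xpos: "0 < real T powr \<beta>" using Tpos by simp
      show ?thesis unfolding e_T A_def e1 e2 using c Tpos xpos by (simp add: field_simps)
    qed
    finally show "\<bar>exp_miscov (deriv (Rfun P \<alpha> \<sigma>)) \<alpha> r1 (\<eta> T) p rs T - \<alpha>\<bar> \<le> A * real T powr (-(1 - \<beta>))" .

    show "exp_regret (deriv (Rfun P \<alpha> \<sigma>)) \<alpha> r1 (\<eta> T) p rs T \<le> C * real T powr (max \<beta> (1 - \<beta>))"
    proof -
      define Kt where "Kt = 2 * Dm / e T + (\<Sum>t=1..T. e t / (\<sigma> * pmin\<^sup>2))"
      define F where "F obs = (\<Sum>i\<in>{1..T}. qloss \<alpha> (Al.rr obs i) (rs i) * (if obs i then 1 else 0) / p i)" for obs
      have er: "exp_regret (deriv (Rfun P \<alpha> \<sigma>)) \<alpha> r1 (\<eta> T) p rs T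
          = measure_pmf.expectation ?\<Omega> F - (INF u. \<Sum>i\<in>{1..T}. qloss \<alpha> u (rs i))"
        unfolding exp_regret_def rr_eq F_def ..
      have rrb: "\<bar>Al.rr obs t\<bar> \<le> Rb0" if "t \<in> {1..T}" for obs t
        using Al.rr_bnd[of t obs] that RbD by simp
      have iq: "integrable (measure_pmf ?\<Omega>) (\<lambda>obs. qloss \<alpha> (Al.rr obs t) (rs t) * (if obs t then 1 else 0) / p t)"
        if t: "t \<in> {1..T}" for t
      proof (rule int_pmf[where K="(Rb0 + B) / pmin"])
        fix obs :: "nat \<Rightarrow> bool"
        have "\<bar>qloss \<alpha> (Al.rr obs t) (rs t)\<bar> \<le> Rb0 + B"
          using qloss_abs[OF alpha, of "Al.rr obs t" "rs t"] rrb[OF t, of obs] rs[of t] by simp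
        then show "\<bar>qloss \<alpha> (Al.rr obs t) (rs t) * (if obs t then 1 else 0) / p t\<bar> \<le> (Rb0 + B) / pmin"
          using pmin p[of t] by (intro weight_abs) auto
      qed
      have iu: "integrable (measure_pmf ?\<Omega>) (\<lambda>obs. qloss \<alpha> u (rs t) * (if obs t then 1 else 0) / p t)" for u t
      proof (rule int_pmf[where K="\<bar>qloss \<alpha> u (rs t)\<bar> / pmin"])
        fix obs :: "nat \<Rightarrow> bool"
        show "\<bar>qloss \<alpha> u (rs t) * (if obs t then 1 else 0) / p t\<bar> \<le> \<bar>qloss \<alpha> u (rs t)\<bar> / pmin"
          using pmin p[of t] by (intro weight_abs) auto
      qed
      have main: "measure_pmf.expectation ?\<Omega> F - Kt \<le> (\<Sum>i\<in>{1..T}. qloss \<alpha> u (rs i))"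
        if u: "0 \<le> u" "u \<le> B" for u
      proof -
        have pu: "\<bar>u\<bar> \<le> Al.Rb" using u Al.B_Rb by simp
        define F1 where "F1 obs = (\<Sum>t=1..T. (qloss \<alpha> (Al.rr obs t) (rs t) - qloss \<alpha> u (rs t)) * (if obs t then 1 else 0) / p t)" for obs
        define F2 where "F2 obs = (\<Sum>t=1..T. qloss \<alpha> u (rs t) * (if obs t then 1 else 0) / p t)" for obs
        have FF: "F = (\<lambda>obs. F1 obs + F2 obs)"
          by (auto simp: F_def F1_def F2_def fun_eq_iff sum.distrib[symmetric] diff_divide_distrib
              left_diff_distrib intro!: sum.cong)
        have iF2: "integrable (measure_pmf ?\<Omega>) F2" unfolding F2_def using iu by auto
        have iF1: "integrable (measure_pmf ?\<Omega>) F1" unfolding F1_def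
        proof (rule Bochner_Integration.integrable_sum)
          fix t assume t: "t \<in> {1..T}"
          show "integrable (measure_pmf ?\<Omega>) (\<lambda>obs. (qloss \<alpha> (Al.rr obs t) (rs t) - qloss \<alpha> u (rs t)) * (if obs t then 1 else 0) / p t)"
          proof (rule int_pmf[where K="(Rb0 + B + \<bar>qloss \<alpha> u (rs t)\<bar>) / pmin"])
            fix obs :: "nat \<Rightarrow> bool"
            have "\<bar>qloss \<alpha> (Al.rr obs t) (rs t)\<bar> \<le> Rb0 + B"
              using qloss_abs[OF alpha, of "Al.rr obs t" "rs t"] rrb[OF t, of obs] rs[of t] by simp
            then have "\<bar>qloss \<alpha> (Al.rr obs t) (rs t) - qloss \<alpha> u (rs t)\<bar> \<le> Rb0 + B + \<bar>qloss \<alpha> u (rs t)\<bar>"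
              by linarith
            then show "\<bar>(qloss \<alpha> (Al.rr obs t) (rs t) - qloss \<alpha> u (rs t)) * (if obs t then 1 else 0) / p t\<bar>
                \<le> (Rb0 + B + \<bar>qloss \<alpha> u (rs t)\<bar>) / pmin"
              using pmin p[of t] by (intro weight_abs) auto
          qed
        qed
        have EF1: "measure_pmf.expectation ?\<Omega> F1 \<le> Kt"
        proof -
          have "measure_pmf.expectation ?\<Omega> F1 \<le> measure_pmf.expectation ?\<Omega> (\<lambda>_. Kt)"
          proof (rule integral_mono[OF iF1])
            fix obs :: "nat \<Rightarrow> bool"
            show "F1 obs \<le> Kt" unfolding F1_def Kt_def
              using Al.regret_path[OF T e_mono pu, of obs] RbD by simp
          qed simp
          then show ?thesis by simp
        qed
        have EF2: "measure_pmf.expectation ?\<Omega> F2 = (\<Sum>i\<in>{1..T}. qloss \<alpha> u (rs i))"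
        proof -
          have "measure_pmf.expectation ?\<Omega> F2
              = (\<Sum>t=1..T. measure_pmf.expectation ?\<Omega> (\<lambda>obs. qloss \<alpha> u (rs t) * (if obs t then 1 else 0) / p t))"
            unfolding F2_def using iu by (simp add: Bochner_Integration.integral_sum)
          also have "\<dots> = (\<Sum>t=1..T. qloss \<alpha> u (rs t))"
          proof (rule sum.cong[OF refl])
            fix t assume t: "t \<in> {1..T}"
            have "(\<lambda>obs. qloss \<alpha> u (rs t) * (if obs t then 1 else 0) / p t)
                = (\<lambda>obs. (qloss \<alpha> u (rs t) / p t) * (if obs t then 1 else 0 :: real))" by auto
            then show "measure_pmf.expectation ?\<Omega> (\<lambda>obs. qloss \<alpha> u (rs t) * (if obs t then 1 else 0) / p t)
                = qloss \<alpha> u (rs t)"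
              using exp_obs[OF t] p[of t] pmin ppos[of t] by simp
          qed
          finally show ?thesis .
        qed
        have "measure_pmf.expectation ?\<Omega> F = measure_pmf.expectation ?\<Omega> F1 + measure_pmf.expectation ?\<Omega> F2"
          unfolding FF using iF1 iF2 by simp
        then show ?thesis using EF1 EF2 by simp
      qed
      have inf: "measure_pmf.expectation ?\<Omega> F - Kt \<le> (INF u. \<Sum>i\<in>{1..T}. qloss \<alpha> u (rs i))"
      proof (rule cINF_greatest)
        fix v :: real
        define u where "u = max 0 (min B v)"
        have "measure_pmf.expectation ?\<Omega> F - Kt \<le> (\<Sum>i\<in>{1..T}. qloss \<alpha> u (rs i))"
          by (rule main) (use B in \<open>auto simp: u_def\<close>)
        also have "\<dots> \<le> (\<Sum>i\<in>{1..T}. qloss \<alpha> v (rs i))"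
          unfolding u_def using alpha rs by (intro sum_mono qloss_clamp) auto
        finally show "measure_pmf.expectation ?\<Omega> F - Kt \<le> (\<Sum>i\<in>{1..T}. qloss \<alpha> v (rs i))" .
      qed simp
      have Ktb: "Kt \<le> C * real T powr (max \<beta> (1 - \<beta>))"
      proof -
        have e2: "real T powr (-\<beta>) = 1 / real T powr \<beta>" by (simp add: powr_minus divide_inverse)
        have xpos: "0 < real T powr \<beta>" using Tpos by simp
        have k1: "2 * Dm / e T = 2 * Dm / c * real T powr \<beta>"
          unfolding e_T e2 using c xpos by (simp add: field_simps)
        have "(\<Sum>t=1..T. e t / (\<sigma> * pmin\<^sup>2)) = (\<Sum>t=1..T. e t) / (\<sigma> * pmin\<^sup>2)"
          by (simp add: sum_divide_distrib)
        also have "\<dots> \<le> (c * real T powr (1 - \<beta>) / (1 - \<beta>)) / (\<sigma> * pmin\<^sup>2)"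
          using e_sum sigma pmin by (intro divide_right_mono) auto
        also have "\<dots> = c / ((1 - \<beta>) * \<sigma> * pmin\<^sup>2) * real T powr (1 - \<beta>)" by simp
        finally have k2: "(\<Sum>t=1..T. e t / (\<sigma> * pmin\<^sup>2)) \<le> c / ((1 - \<beta>) * \<sigma> * pmin\<^sup>2) * real T powr (1 - \<beta>)" .
        have m1: "real T powr \<beta> \<le> real T powr (max \<beta> (1 - \<beta>))" using T by (intro powr_mono) auto
        have m2: "real T powr (1 - \<beta>) \<le> real T powr (max \<beta> (1 - \<beta>))" using T by (intro powr_mono) auto
        have c1: "0 \<le> 2 * Dm / c" using Dm c by simp
        have c2: "0 \<le> c / ((1 - \<beta>) * \<sigma> * pmin\<^sup>2)" using c beta sigma pmin by simp
        have "Kt \<le> 2 * Dm / c * real T powr \<beta> + c / ((1 - \<beta>) * \<sigma> * pmin\<^sup>2) * real T powr (1 - \<beta>)"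
          unfolding Kt_def k1 using k2 by simp
        also have "\<dots> \<le> 2 * Dm / c * real T powr (max \<beta> (1 - \<beta>)) + c / ((1 - \<beta>) * \<sigma> * pmin\<^sup>2) * real T powr (max \<beta> (1 - \<beta>))"
          using m1 m2 c1 c2 by (intro add_mono mult_left_mono) auto
        also have "\<dots> = C * real T powr (max \<beta> (1 - \<beta>))" unfolding C_def by (simp add: algebra_simps)
        finally show ?thesis .
      qed
      show ?thesis unfolding er using inf Ktb by linarith
    qed
  qed
qed



end
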